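(* Let $n\ge 1$, $s\in D^n$, and let $f\in\mathrm{Min}(s)$ be monic of degree $d$. Let $t\in D^{\mathbb{N}}$ be the extension of $s$ by $f$, i.e. $t_i=s_i$ for $1\le i\le n$ and $t_j=-(f_0t_{j-d}+\cdots+f_{d-1}t_{j-1})$ for all $j\ge n+1$. If the ideal $\mathrm{Ann}(t)\subseteq D[x]$ is principal, then $\mathrm{Ann}(t)=(f)$.
   Context: Let $D$ be a commutative integral domain with $1\neq 0$. For a finite sequence $s=(s_1,\dots,s_n)\in D^n$, a polynomial $f\in D[x]$ is an annihilator of $s$, written $f\in\mathrm{Ann}(s)$, if $f=0$, or $d=\deg f\ge 0$ and $\sum_{k=0}^{d}f_ks_{j-d+k}=0$ for all $j$ with $d+1\le j\le n$. $\mathrm{Min}(s)$ denotes the set of nonzero annihilators of $s$ of least possible degree. For an infinite sequence $t=(t_1,t_2,\dots)\in D^{\mathbb{N}}$, $\mathrm{Ann}(t)$ is the set of $f\in D[x]$ such that $f=0$, or $d=\deg f\ge0$ and $\sum_{k=0}^{d}f_kt_{j-d+k}=0$ for all $j\ge d+1$; it is an ideal of $D[x]$. *)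

theory Defs
  imports "HOL-Computational_Algebra.Polynomial"
begin

text \<open>Finite sequences s = (s_1,...,s_n) are functions nat => 'a, only indices 1..n matter.
  Infinite sequences t = (t_1,t_2,...) are functions nat => 'a, only indices >= 1 matter.\<close>

definition ann_fin :: "nat \<Rightarrow> (nat \<Rightarrow> 'a::comm_ring_1) \<Rightarrow> 'a poly \<Rightarrow> bool" where
  "ann_fin n s f \<longleftrightarrow> f = 0 \<or>
     (\<forall>j. degree f + 1 \<le> j \<and> j \<le> n \<longrightarrow>
        (\<Sum>k\<le>degree f. coeff f k * s (j - degree f + k)) = 0)"

definition min_ann :: "nat \<Rightarrow> (nat \<Rightarrow> 'a::comm_ring_1) \<Rightarrow> 'a poly set" where
  "min_ann n s = {f. f \<noteq> 0 \<and> ann_fin n s f \<and>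
     (\<forall>g. g \<noteq> 0 \<and> ann_fin n s g \<longrightarrow> degree f \<le> degree g)}"

definition ann_inf :: "(nat \<Rightarrow> 'a::comm_ring_1) \<Rightarrow> 'a poly set" where
  "ann_inf t = {f. f = 0 \<or>
     (\<forall>j. degree f + 1 \<le> j \<longrightarrow>
        (\<Sum>k\<le>degree f. coeff f k * t (j - degree f + k)) = 0)}"

definition principal_ideal :: "'a::comm_ring_1 poly \<Rightarrow> 'a poly set" where
  "principal_ideal g = {g * h | h. True}"

end

theory Submission
  imports Defs
begin

theorem mainTheorem1:
  fixes s t :: "nat \<Rightarrow> 'a::idom" and f :: "'a poly" and n :: nat
  assumes "n \<ge> 1"
    and "f \<in> min_ann n s"
    and "lead_coeff f = 1"
    and "\<forall>i. 1 \<le> i \<and> i \<le> n \<longrightarrow> t i = s i"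
    and "\<forall>j. n + 1 \<le> j \<longrightarrow>
           t j = - (\<Sum>k<degree f. coeff f k * t (j - degree f + k))"
    and "\<exists>g. ann_inf t = principal_ideal g"
  shows "ann_inf t = principal_ideal f"
proof -
  define d where "d = degree f"
  have fnz: "f \<noteq> 0" and fann: "ann_fin n s f"
    and fmin: "\<And>g. g \<noteq> 0 \<Longrightarrow> ann_fin n s g \<Longrightarrow> degree f \<le> degree g"
    using assms(2) unfolding min_ann_def by auto
  have "ann_fin n s (monom 1 n)" unfolding ann_fin_def by (auto simp add: degree_monom_eq)
  hence dn: "d \<le> n" using fmin[of "monom 1 n"] by (simp add: degree_monom_eq d_def)
  have fin: "f \<in> ann_inf t"
    unfolding ann_inf_def
  proof (intro CollectI disjI2 allI impI)
    fix j assume j: "degree f + 1 \<le> j"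
    have split: "(\<Sum>k\<le>degree f. coeff f k * t (j - degree f + k))
        = (\<Sum>k<degree f. coeff f k * t (j - degree f + k)) + t j"
      using j assms(3) by (simp add: lessThan_Suc_atMost[symmetric])
    show "(\<Sum>k\<le>degree f. coeff f k * t (j - degree f + k)) = 0"
    proof (cases "n + 1 \<le> j")
      case True thus ?thesis using split assms(5) by simp
    next
      case False
      have "(\<Sum>k\<le>degree f. coeff f k * t (j - degree f + k))
          = (\<Sum>k\<le>degree f. coeff f k * s (j - degree f + k))"
        proof (intro sum.cong refl)
        fix k assume "k \<in> {..degree f}"
        hence "1 \<le> j - degree f + k" "j - degree f + k \<le> n" using False j by auto
        thus "coeff f k * t (j - degree f + k) = coeff f k * s (j - degree f + k)"
          using assms(4) by simp
      qed
      also have "\<dots> = 0" using fann fnz False j unfolding ann_fin_def by auto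
      finally show ?thesis .
    qed
  qed
  obtain g where g: "ann_inf t = principal_ideal g" using assms(6) by blast
  obtain h where fgh: "f = g * h" using fin g unfolding principal_ideal_def by auto
  have gnz: "g \<noteq> 0" and hnz: "h \<noteq> 0" using fgh fnz by auto
  have "g \<in> ann_inf t" unfolding g principal_ideal_def by (auto intro: exI[of _ 1])
  hence gann: "ann_fin n s g"
    unfolding ann_fin_def ann_inf_def
  proof (intro disjI2 allI impI)
    fix j assume gi: "g \<in> {f. f = 0 \<or> (\<forall>j. degree f + 1 \<le> j \<longrightarrow>
        (\<Sum>k\<le>degree f. coeff f k * t (j - degree f + k)) = 0)}"
      and j: "degree g + 1 \<le> j \<and> j \<le> n"
    have "(\<Sum>k\<le>degree g. coeff g k * s (j - degree g + k))
        = (\<Sum>k\<le>degree g. coeff g k * t (j - degree g + k))"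
      proof (intro sum.cong refl)
      fix k assume "k \<in> {..degree g}"
      hence "1 \<le> j - degree g + k" "j - degree g + k \<le> n" using j by auto
      thus "coeff g k * s (j - degree g + k) = coeff g k * t (j - degree g + k)"
        using assms(4) by simp
    qed
    also have "\<dots> = 0" using gi gnz j by auto
    finally show "(\<Sum>k\<le>degree g. coeff g k * s (j - degree g + k)) = 0" .
  qed
  have "degree f \<le> degree g" using fmin gnz gann by blast
  moreover have "degree f = degree g + degree h" using fgh gnz hnz degree_mult_eq by blast
  ultimately have "degree h = 0" by simp
  then obtain c where hc: "h = [:c:]" using degree_eq_zeroE by blast
  have lc: "lead_coeff g * c = 1" using assms(3) fgh hc by (cases "c = 0") (auto simp: mult.commute)
  have gf: "g = f * [:lead_coeff g:]"
    using fgh hc lc by (simp add: mult.assoc mult.commute)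
  show ?thesis unfolding g principal_ideal_def
  proof (intro set_eqI iffI)
    fix x assume "x \<in> {g * h |h. True}"
    then obtain y where "x = g * y" by auto
    hence "x = f * ([:lead_coeff g:] * y)" using gf by (metis mult.assoc)
    thus "x \<in> {f * h |h. True}" by blast
  next
    fix x assume "x \<in> {f * h |h. True}"
    then obtain y where "x = f * y" by auto
    hence "x = g * (h * y)" using fgh by (metis mult.assoc)
    thus "x \<in> {g * h |h. True}" by blast
  qed
qed

end
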